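(* Let $\Lambda,\delta>0$ and $T=L(\Lambda+1)\delta$ with $L\in\mathbb N$. The minimizers of $\mathcal F^T_0$ in $\mathscr A^{T,\Lambda,\delta}$ are exactly the functions $\bar u(\cdot-x_0)-\frac{\Lambda\delta}2$ with $x_0\in\mathbb R$.
   Context: The admissible class $\mathscr A^{T,\Lambda,\delta}$ is the set of continuous, $T$-periodic, piecewise affine functions $u:\mathbb R\to\mathbb R$ with $u'\in\{1,-\Lambda\}$ a.e., such that $(u')^{-1}(\{-\Lambda\})=\bigcup_{k\in\mathbb N}I^k$ for some intervals $I^k$ with $|I^k|=\delta$ for all $k$ and $\#(I^i\cap I^j)\le1$ for all $i\ne j$. The functional is $\mathcal F^T_0(u):=\frac1{2T}\int_0^T|u(x)|^2\,dx$. $\bar u$ is the $(\Lambda+1)\delta$-periodic function defined on $(-\delta,\Lambda\delta]$ by $\bar u(x)=-\Lambda x$ for $-\delta<x<0$ and $\bar u(x)=x$ for $0\le x\le\Lambda\delta$. *)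

theory Defs
  imports "HOL-Analysis.Analysis"
begin

text \<open>Piecewise affine: there is a locally finite set D of break points outside which
  u is differentiable with derivative 1 or -\<Lambda>.\<close>

definition admissible :: "real \<Rightarrow> real \<Rightarrow> real \<Rightarrow> (real \<Rightarrow> real) \<Rightarrow> bool" where
  "admissible T \<Lambda> \<delta> u \<longleftrightarrow>
     continuous_on UNIV u \<and>
     (\<forall>x. u (x + T) = u x) \<and>
     (\<exists>D :: real set.
        (\<forall>a b. finite (D \<inter> {a..b})) \<and>
        (\<forall>x. x \<notin> D \<longrightarrow>
           (u has_real_derivative 1) (at x) \<or> (u has_real_derivative (- \<Lambda>)) (at x))) \<and>
     (\<exists>I :: nat \<Rightarrow> real set.
        (\<forall>k. \<exists>a. {a<..<a + \<delta>} \<subseteq> I k \<and> I k \<subseteq> {a..a + \<delta>}) \<and>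
        (\<forall>i j. i \<noteq> j \<longrightarrow> finite (I i \<inter> I j) \<and> card (I i \<inter> I j) \<le> 1) \<and>
        (AE x in lborel. ((u has_real_derivative (- \<Lambda>)) (at x) \<longleftrightarrow> x \<in> (\<Union>k. I k))))"

definition F0 :: "real \<Rightarrow> (real \<Rightarrow> real) \<Rightarrow> real" where
  "F0 T u = (1 / (2 * T)) * integral {0..T} (\<lambda>x. (u x)\<^sup>2)"

definition minimizer :: "real \<Rightarrow> real \<Rightarrow> real \<Rightarrow> (real \<Rightarrow> real) \<Rightarrow> bool" where
  "minimizer T \<Lambda> \<delta> u \<longleftrightarrow>
     admissible T \<Lambda> \<delta> u \<and> (\<forall>v. admissible T \<Lambda> \<delta> v \<longrightarrow> F0 T u \<le> F0 T v)"

text \<open>\<open>ubar\<close>: the ((\<Lambda>+1)\<delta>)-periodic function equal to -\<Lambda>x on (-\<delta>,0) and x on [0,\<Lambda>\<delta>].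
  The reduction y lies in (-\<delta>, \<Lambda>\<delta>].\<close>

definition ubar :: "real \<Rightarrow> real \<Rightarrow> real \<Rightarrow> real" where
  "ubar \<Lambda> \<delta> x =
     (let P = (\<Lambda> + 1) * \<delta>;
          y = x - P * of_int \<lceil>(x - \<Lambda> * \<delta>) / P\<rceil>
      in if y < 0 then - \<Lambda> * y else y)"

end

theory Submission
  imports Defs
begin
lemma periodic_int:
  fixes f :: "real \<Rightarrow> 'a"
  assumes "\<And>x. f (x + T) = f x"
  shows "f (x + of_int n * T) = f x"
proof -
  have nat: "f (y + real m * T) = f y" for y m
  proof (induction m)
    case (Suc m)
    have "f (y + real (Suc m) * T) = f ((y + real m * T) + T)" by (simp add: algebra_simps)
    then show ?case using Suc assms by simp
  qed simp
  show ?thesis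
  proof (cases "n \<ge> 0")
    case True
    then show ?thesis using nat[of x "nat n"] by simp
  next
    case False
    then have "x = (x + of_int n * T) + real (nat (-n)) * T" by simp
    then show ?thesis using nat[of "x + of_int n * T" "nat (-n)"] by metis
  qed
qed

lemma periodic_integral:
  fixes f :: "real \<Rightarrow> real"
  assumes per: "\<And>x. f (x + T) = f x" and cont: "continuous_on UNIV f" and T: "T > 0"
  shows "integral {a..a+T} f = integral {0..T} f"
proof -
  define n where "n = \<lceil>a / T\<rceil>"
  define b where "b = of_int n * T"
  have "a / T \<le> n" "n < a / T + 1" unfolding n_def by linarith+
  then have ab: "a \<le> b" "b \<le> a + T" unfolding b_def using T by (auto simp: field_simps)
  have int: "f integrable_on {x..y}" for x y
    by (rule integrable_continuous_interval) (use cont continuous_on_subset in blast)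
  have shiftT: "f \<circ> (+) T = f" by (auto simp: per add.commute)
  have shiftb: "f \<circ> (+) b = f" unfolding b_def
    by (auto simp: fun_eq_iff periodic_int[of f T, OF per] add.commute)
  have "integral {a..a+T} f = integral {a..b} f + integral {b..a+T} f"
    using Henstock_Kurzweil_Integration.integral_combine[of a b "a+T" f] ab int by simp
  also have "integral {a..b} f = integral {a+T..b+T} f"
    using integral_shift_Icc_real[of a b f T] shiftT by simp
  also have "integral {a+T..b+T} f + integral {b..a+T} f = integral {b..b+T} f"
    using Henstock_Kurzweil_Integration.integral_combine[of b "a+T" "b+T" f] ab int by simp
  also have "integral {b..b+T} f = integral {0..T} f"
    using integral_shift_Icc_real[of 0 T f b] shiftb by (simp add: add.commute)
  finally show ?thesis by simp
qed

definition nxt :: "real set \<Rightarrow> real \<Rightarrow> real \<Rightarrow> real" where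
  "nxt A q x = Min ({y\<in>A. x < y} \<union> {q})"

lemma telescope:
  fixes F :: "real \<Rightarrow> 'a::ab_group_add"
  assumes "finite A" "A \<subseteq> {p..<q}" "p \<in> A"
  shows "(\<Sum>x\<in>A. F (nxt A q x) - F x) = F q - F p"
  using assms
proof (induction "card A" arbitrary: A q rule: less_induct)
  case less
  define m where "m = Max A"
  have mA: "m \<in> A" using less Max_in m_def by blast
  have mge: "x \<le> m" if "x \<in> A" for x using less that m_def by simp
  show ?case
  proof (cases "m = p")
    case True
    then have A: "A = {p}" using less mge by fastforce
    have e: "{y. y = p \<and> p < y} = {}" by auto
    show ?thesis using A by (simp add: nxt_def e)
  next
    case False
    define A' where "A' = A - {m}"
    have pA': "p \<in> A'" using False less A'_def by auto
    have A'sub: "A' \<subseteq> {p..<m}" using mge less A'_def by fastforce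
    have cardA': "card A' < card A" using mA less(2) A'_def card_Diff1_less[of A m] by blast
    have IH: "(\<Sum>x\<in>A'. F (nxt A' m x) - F x) = F m - F p"
      using less(1)[OF cardA' _ A'sub pA'] less(2) A'_def by simp
    have mq: "m < q" using mA less by auto
    have eq: "nxt A q x = nxt A' m x" if "x \<in> A'" for x
    proof -
      have xm: "x < m" using that A'sub by auto
      have "{y\<in>A. x < y} \<union> {q} = insert q ({y\<in>A'. x < y} \<union> {m})"
        using xm mA A'_def by auto
      then have "nxt A q x = Min (insert q ({y\<in>A'. x < y} \<union> {m}))" unfolding nxt_def by simp
      also have "\<dots> = min q (Min ({y\<in>A'. x < y} \<union> {m}))"
        using less(2) A'_def by (subst Min_insert) auto
      also have "Min ({y\<in>A'. x < y} \<union> {m}) \<le> m"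
        using less(2) A'_def by (intro Min_le) auto
      then have "min q (Min ({y\<in>A'. x < y} \<union> {m})) = Min ({y\<in>A'. x < y} \<union> {m})"
        using mq by simp
      finally show ?thesis unfolding nxt_def by simp
    qed
    have e: "{y\<in>A. m < y} = {}" using mge by force
    have nm: "nxt A q m = q" unfolding nxt_def by (simp add: e)
    have "(\<Sum>x\<in>A. F (nxt A q x) - F x) = (F (nxt A q m) - F m) + (\<Sum>x\<in>A'. F (nxt A q x) - F x)"
      using less(2) mA A'_def by (simp add: sum.remove)
    also have "(\<Sum>x\<in>A'. F (nxt A q x) - F x) = (\<Sum>x\<in>A'. F (nxt A' m x) - F x)"
      using eq by (intro sum.cong) auto
    finally show ?thesis using IH nm by simp
  qed
qed

lemma ubar_eq:
  assumes L: "\<Lambda> > 0" and d: "\<delta> > 0" and y: "- \<delta> < y" "y \<le> \<Lambda> * \<delta>"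
  shows "ubar \<Lambda> \<delta> (y + of_int m * ((\<Lambda> + 1) * \<delta>)) = (if y < 0 then - \<Lambda> * y else y)"
proof -
  define P where "P = (\<Lambda> + 1) * \<delta>"
  have P: "P > 0" using L d unfolding P_def by (intro mult_pos_pos) auto
  have "\<lceil>(y + of_int m * P - \<Lambda> * \<delta>) / P\<rceil> = m"
  proof (rule ceiling_unique)
    have "(y + of_int m * P - \<Lambda> * \<delta>) / P = of_int m + (y - \<Lambda> * \<delta>) / P"
      using P by (simp add: field_simps)
    moreover have "(y - \<Lambda> * \<delta>) / P \<le> 0" using y P by (simp add: divide_nonpos_pos)
    moreover have "-1 < (y - \<Lambda> * \<delta>) / P" using y P by (simp add: field_simps P_def)
    ultimately show "of_int m - 1 < (y + of_int m * P - \<Lambda> * \<delta>) / P"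
      "(y + of_int m * P - \<Lambda> * \<delta>) / P \<le> of_int m" by linarith+
  qed
  then show ?thesis unfolding ubar_def Let_def P_def[symmetric] by simp
qed

lemma ubar_repr:
  fixes \<Lambda> \<delta> z :: real
  assumes L: "\<Lambda> > 0" and d: "\<delta> > 0"
  obtains y m where "- \<delta> < y" "y \<le> \<Lambda> * \<delta>" "z = y + of_int m * ((\<Lambda> + 1) * \<delta>)"
proof -
  define P where "P = (\<Lambda> + 1) * \<delta>"
  have P: "P > 0" using L d unfolding P_def by (intro mult_pos_pos) auto
  define m where "m = \<lceil>(z - \<Lambda> * \<delta>) / P\<rceil>"
  have "(z - \<Lambda> * \<delta>) / P \<le> m" "m < (z - \<Lambda> * \<delta>) / P + 1" unfolding m_def by linarith+
  then have "z - \<Lambda> * \<delta> \<le> m * P" "m * P < z - \<Lambda> * \<delta> + P" using P by (auto simp: field_simps)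
  then have "- \<delta> < z - m * P" "z - m * P \<le> \<Lambda> * \<delta>" by (auto simp: P_def algebra_simps)
  then show ?thesis using that[of "z - m * P" m] by (simp add: P_def)
qed

lemma ubar_per:
  assumes L: "\<Lambda> > 0" and d: "\<delta> > 0"
  shows "ubar \<Lambda> \<delta> (z + of_int n * ((\<Lambda> + 1) * \<delta>)) = ubar \<Lambda> \<delta> z"
proof -
  obtain y m where y: "- \<delta> < y" "y \<le> \<Lambda> * \<delta>" and z: "z = y + of_int m * ((\<Lambda> + 1) * \<delta>)"
    using ubar_repr[OF L d] by blast
  have e: "z + of_int n * ((\<Lambda> + 1) * \<delta>) = y + of_int (m + n) * ((\<Lambda> + 1) * \<delta>)"
    using z by (simp add: algebra_simps)
  show ?thesis
    apply (subst e) apply (subst z) by (simp only: ubar_eq[OF L d y])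
qed

definition phi :: "real \<Rightarrow> real \<Rightarrow> real" where
  "phi \<Lambda> y = (if y < 0 then - \<Lambda> * y else y)"

lemma phi_max: "(\<Lambda>::real) > 0 \<Longrightarrow> phi \<Lambda> y = max y (- \<Lambda> * y)"
proof (cases "y < 0")
  case True
  assume L: "\<Lambda> > 0"
  have "- \<Lambda> * y > 0" using True L by (simp add: mult_pos_neg)
  then show ?thesis using True unfolding phi_def by (simp add: max_def)
next
  case False
  assume L: "\<Lambda> > 0"
  have "- \<Lambda> * y \<le> 0" using False L by (simp add: mult_nonneg_nonneg)
  then show ?thesis using False unfolding phi_def by (simp add: max_def)
qed

lemma cont_phi: "(\<Lambda>::real) > 0 \<Longrightarrow> continuous_on UNIV (phi \<Lambda>)"
proof -
  assume L: "\<Lambda> > 0"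
  have "phi \<Lambda> = (\<lambda>y. max y (- \<Lambda> * y))" using phi_max[OF L] by auto
  then show ?thesis by (simp add: continuous_intros)
qed

lemma isCont_phi: "(\<Lambda>::real) > 0 \<Longrightarrow> isCont (\<lambda>x. phi \<Lambda> (x - c)) z"
proof -
  assume L: "\<Lambda> > 0"
  have "(\<lambda>x. phi \<Lambda> (x - c)) = (\<lambda>x. max (x - c) (- \<Lambda> * (x - c)))" using phi_max[OF L] by auto
  then show ?thesis by (simp add: continuous_intros)
qed

lemma ubar_G:
  assumes L: "\<Lambda> > 0" and d: "\<delta> > 0"
    and w: "of_int m * ((\<Lambda> + 1) * \<delta>) - \<delta> < w" "w \<le> of_int (m+1) * ((\<Lambda> + 1) * \<delta>) + \<Lambda> * \<delta>"
  shows "ubar \<Lambda> \<delta> w = min (phi \<Lambda> (w - of_int m * ((\<Lambda> + 1) * \<delta>)))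
                            (phi \<Lambda> (w - of_int (m+1) * ((\<Lambda> + 1) * \<delta>)))"
proof -
  define P where "P = (\<Lambda> + 1) * \<delta>"
  have P: "P > 0" using L d unfolding P_def by (intro mult_pos_pos) auto
  show ?thesis
  proof (cases "w \<le> of_int m * P + \<Lambda> * \<delta>")
    case True
    define y where "y = w - of_int m * P"
    have y: "- \<delta> < y" "y \<le> \<Lambda> * \<delta>" using w True by (auto simp: y_def P_def)
    have u: "ubar \<Lambda> \<delta> w = phi \<Lambda> y"
      using ubar_eq[OF L d y, of m] by (simp add: y_def P_def phi_def)
    have e: "w - of_int (m+1) * P = y - P" by (simp add: y_def algebra_simps)
    have ly: "\<Lambda>*y \<le> \<Lambda>*(\<Lambda>*\<delta>)" using y(2) L by (simp add: mult_left_mono)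
    moreover have "phi \<Lambda> y \<le> phi \<Lambda> (y - P)"
    proof -
      have "y - P < 0" using y d L unfolding P_def by (simp add: algebra_simps)
      then have "phi \<Lambda> (y - P) = - \<Lambda> * (y - P)" by (simp add: phi_def)
      moreover have "phi \<Lambda> y \<le> max y (- \<Lambda> * y)" using phi_max[OF L] by simp
      moreover have "y \<le> - \<Lambda> * (y - P)" using ly y unfolding P_def by (simp add: algebra_simps)
      moreover have "- \<Lambda> * y \<le> - \<Lambda> * (y - P)" using L d unfolding P_def by (simp add: algebra_simps mult_pos_pos)
      ultimately show ?thesis by linarith
    qed
    then have "ubar \<Lambda> \<delta> w = min (phi \<Lambda> (w - of_int m * P)) (phi \<Lambda> (w - of_int (m+1) * P))"
      unfolding e y_def[symmetric] using u by simp
    then show ?thesis by (simp only: P_def)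
  next
    case False
    define y where "y = w - of_int (m+1) * P"
    have y: "- \<delta> < y" "y \<le> \<Lambda> * \<delta>" using w False by (auto simp: y_def P_def algebra_simps)
    have u: "ubar \<Lambda> \<delta> w = phi \<Lambda> y"
      using ubar_eq[OF L d y, of "m+1"] by (simp add: y_def P_def phi_def)
    have e: "w - of_int m * P = y + P" by (simp add: y_def algebra_simps)
    have "phi \<Lambda> y \<le> phi \<Lambda> (y + P)"
    proof -
      have yP: "y + P > \<Lambda> * \<delta>" using y(1) unfolding P_def by (simp add: algebra_simps)
      have "\<Lambda> * \<delta> > 0" using L d by simp
      then have "phi \<Lambda> (y + P) = y + P" using yP by (simp add: phi_def)
      moreover have "phi \<Lambda> y \<le> max y (- \<Lambda> * y)" using phi_max[OF L] by simp
      moreover have "- \<Lambda> * y \<le> \<Lambda> * \<delta>" using mult_left_mono[of "-\<delta>" y \<Lambda>] y(1) L by simp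
      moreover have "y \<le> y + P" using L d unfolding P_def by simp
      ultimately show ?thesis using yP by linarith
    qed
    then have "ubar \<Lambda> \<delta> w = min (phi \<Lambda> (w - of_int m * P)) (phi \<Lambda> (w - of_int (m+1) * P))"
      unfolding e y_def[symmetric] using u by simp
    then show ?thesis by (simp only: P_def)
  qed
qed

lemma ubar_cont:
  assumes L: "\<Lambda> > 0" and d: "\<delta> > 0"
  shows "isCont (ubar \<Lambda> \<delta>) z"
proof -
  define P where "P = (\<Lambda> + 1) * \<delta>"
  have P: "P > 0" using L d unfolding P_def by (intro mult_pos_pos) auto
  define m where "m = \<lfloor>z / P\<rfloor>"
  have "of_int m \<le> z / P" "z / P < of_int m + 1" unfolding m_def by linarith+
  then have mz: "of_int m * P \<le> z" "z < of_int m * P + P" using P by (auto simp: field_simps)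
  define G where "G = (\<lambda>w. min (phi \<Lambda> (w - of_int m * P)) (phi \<Lambda> (w - of_int (m+1) * P)))"
  have "isCont G z"
    unfolding G_def
    by (intro continuous_intros isCont_phi[OF L])
  moreover have "eventually (\<lambda>w. ubar \<Lambda> \<delta> w = G w) (nhds z)"
  proof (rule eventually_nhds_in_open[THEN eventually_mono])
    show "open {of_int m * P - \<delta> <..< of_int (m+1) * P + \<Lambda> * \<delta>}" by simp
    show "z \<in> {of_int m * P - \<delta> <..< of_int (m+1) * P + \<Lambda> * \<delta>}"
    proof -
      have "\<Lambda> * \<delta> > 0" using L d by simp
      then show ?thesis using mz d by (simp add: algebra_simps)
    qed
    show "ubar \<Lambda> \<delta> w = G w" if "w \<in> {of_int m * P - \<delta> <..< of_int (m+1) * P + \<Lambda> * \<delta>}" for w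
      using that ubar_G[OF L d, of m w] by (simp add: G_def P_def)
  qed
  ultimately show ?thesis using isCont_cong by blast
qed

lemma ubar_deriv:
  assumes L: "\<Lambda> > 0" and d: "\<delta> > 0"
    and t: "t - x0 = y + of_int m * ((\<Lambda> + 1) * \<delta>)" and y: "- \<delta> < y" "y < \<Lambda> * \<delta>" "y \<noteq> 0"
  shows "((\<lambda>x. ubar \<Lambda> \<delta> (x - x0) - \<Lambda> * \<delta> / 2) has_real_derivative (if y < 0 then - \<Lambda> else 1)) (at t)"
proof -
  define P where "P = (\<Lambda> + 1) * \<delta>"
  show ?thesis
  proof (cases "y < 0")
    case True
    define S where "S = {x0 + of_int m * P - \<delta> <..< x0 + of_int m * P}"
    have "((\<lambda>x. - \<Lambda> * (x - x0 - of_int m * P) - \<Lambda> * \<delta> / 2) has_real_derivative - \<Lambda>) (at t)"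
      by (auto intro!: derivative_eq_intros)
    moreover have "t \<in> S" using t y True unfolding S_def P_def by auto
    moreover have "- \<Lambda> * (x - x0 - of_int m * P) - \<Lambda> * \<delta> / 2 = ubar \<Lambda> \<delta> (x - x0) - \<Lambda> * \<delta> / 2"
      if "x \<in> S" for x
    proof -
      have s: "x0 + of_int m * P - \<delta> < x" "x < x0 + of_int m * P" using that S_def by auto
      have "\<Lambda>*\<delta> > 0" using L d by simp
      then have *: "- \<delta> < x - x0 - of_int m * P" "x - x0 - of_int m * P \<le> \<Lambda> * \<delta>"
        using s by linarith+
      have "x - x0 = (x - x0 - of_int m * P) + of_int m * P" by simp
      then show ?thesis using ubar_eq[OF L d *, of m] that unfolding S_def P_def by auto
    qed
    ultimately show ?thesis using True
      by (auto intro: has_field_derivative_transform_within_open[where S=S] simp: S_def)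
  next
    case False
    then have yp: "y > 0" using y by simp
    define S where "S = {x0 + of_int m * P <..< x0 + of_int m * P + \<Lambda> * \<delta>}"
    have "((\<lambda>x. (x - x0 - of_int m * P) - \<Lambda> * \<delta> / 2) has_real_derivative 1) (at t)"
      by (auto intro!: derivative_eq_intros)
    moreover have "t \<in> S" using t y yp unfolding S_def P_def by auto
    moreover have "(x - x0 - of_int m * P) - \<Lambda> * \<delta> / 2 = ubar \<Lambda> \<delta> (x - x0) - \<Lambda> * \<delta> / 2"
      if "x \<in> S" for x
    proof -
      have s: "x0 + of_int m * P < x" "x < x0 + of_int m * P + \<Lambda> * \<delta>" using that S_def by auto
      have "\<Lambda>*\<delta> > 0" using L d by simp
      then have *: "- \<delta> < x - x0 - of_int m * P" "x - x0 - of_int m * P \<le> \<Lambda> * \<delta>"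
        using s d by linarith+
      have "x - x0 = (x - x0 - of_int m * P) + of_int m * P" by simp
      then show ?thesis using ubar_eq[OF L d *, of m] that unfolding S_def P_def by auto
    qed
    ultimately show ?thesis using False
      by (auto intro: has_field_derivative_transform_within_open[where S=S] simp: S_def)
  qed
qed

lemma ubar_adm:
  assumes L: "\<Lambda> > 0" and d: "\<delta> > 0" and T: "T = real n * (\<Lambda> + 1) * \<delta>"
  shows "admissible T \<Lambda> \<delta> (\<lambda>x. ubar \<Lambda> \<delta> (x - x0) - \<Lambda> * \<delta> / 2)"
proof -
  define P where "P = (\<Lambda> + 1) * \<delta>"
  have P: "P > 0" using L d unfolding P_def by (intro mult_pos_pos) auto
  have ld: "\<Lambda> * \<delta> > 0" using L d by simp
  define u where "u = (\<lambda>x. ubar \<Lambda> \<delta> (x - x0) - \<Lambda> * \<delta> / 2)"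
  have cont: "continuous_on UNIV u"
    unfolding u_def
    by (intro continuous_at_imp_continuous_on ballI continuous_intros
          continuous_at_compose[OF _ ubar_cont[OF L d], unfolded o_def])
  have per: "\<forall>x. u (x + T) = u x"
  proof
    fix x
    have e: "x + T - x0 = (x - x0) + real n * ((\<Lambda> + 1) * \<delta>)" using T by simp
    have "ubar \<Lambda> \<delta> ((x - x0) + real n * ((\<Lambda> + 1) * \<delta>)) = ubar \<Lambda> \<delta> (x - x0)"
      using ubar_per[OF L d, of "x - x0" "int n"] by simp
    then show "u (x + T) = u x" unfolding u_def e by simp
  qed
  define D where "D = range (\<lambda>m::int. x0 + of_int m * P) \<union> range (\<lambda>m::int. x0 + of_int m * P + \<Lambda> * \<delta>)"
  have Dfin: "finite (D \<inter> {a..b})" for a b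
  proof -
    have "D \<inter> {a..b} \<subseteq> (\<lambda>m::int. x0 + of_int m * P) ` {\<lceil>(a - x0) / P\<rceil>..\<lfloor>(b - x0) / P\<rfloor>}
        \<union> (\<lambda>m::int. x0 + of_int m * P + \<Lambda> * \<delta>) ` {\<lceil>(a - x0 - \<Lambda> * \<delta>) / P\<rceil>..\<lfloor>(b - x0 - \<Lambda> * \<delta>) / P\<rfloor>}"
    proof
      fix z assume z: "z \<in> D \<inter> {a..b}"
      then obtain m where "z = x0 + of_int m * P \<or> z = x0 + of_int m * P + \<Lambda> * \<delta>" unfolding D_def by auto
      then show "z \<in> (\<lambda>m::int. x0 + of_int m * P) ` {\<lceil>(a - x0) / P\<rceil>..\<lfloor>(b - x0) / P\<rfloor>}
        \<union> (\<lambda>m::int. x0 + of_int m * P + \<Lambda> * \<delta>) ` {\<lceil>(a - x0 - \<Lambda> * \<delta>) / P\<rceil>..\<lfloor>(b - x0 - \<Lambda> * \<delta>) / P\<rfloor>}"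
      proof
        assume zm: "z = x0 + of_int m * P"
        then have "(a - x0) / P \<le> m" "m \<le> (b - x0) / P" using z P by (auto simp: field_simps)
        then have "m \<in> {\<lceil>(a - x0) / P\<rceil>..\<lfloor>(b - x0) / P\<rfloor>}" by (simp add: ceiling_le le_floor_iff)
        then show ?thesis using zm by blast
      next
        assume zm: "z = x0 + of_int m * P + \<Lambda> * \<delta>"
        then have "(a - x0 - \<Lambda> * \<delta>) / P \<le> m" "m \<le> (b - x0 - \<Lambda> * \<delta>) / P" using z P by (auto simp: field_simps)
        then have "m \<in> {\<lceil>(a - x0 - \<Lambda> * \<delta>) / P\<rceil>..\<lfloor>(b - x0 - \<Lambda> * \<delta>) / P\<rfloor>}" by (simp add: ceiling_le le_floor_iff)
        then show ?thesis using zm by blast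
      qed
    qed
    then show ?thesis by (rule finite_subset) auto
  qed
  have repr: "\<exists>y m. t - x0 = y + of_int m * P \<and> ((- \<delta> < y \<and> y < 0) \<or> (0 < y \<and> y < \<Lambda> * \<delta>))"
    if "t \<notin> D" for t
  proof -
    obtain y m where y: "- \<delta> < y" "y \<le> \<Lambda> * \<delta>" and tm: "t - x0 = y + of_int m * P"
      using ubar_repr[OF L d, of "t - x0"] unfolding P_def by blast
    have "y \<noteq> 0" using that tm unfolding D_def by (auto simp: algebra_simps)
    moreover have "y \<noteq> \<Lambda> * \<delta>" using that tm unfolding D_def by (auto simp: algebra_simps)
    ultimately show ?thesis using y tm by (metis linorder_neqE_linordered_idom order_le_less)
  qed
  have deriv: "(u has_real_derivative 1) (at t) \<or> (u has_real_derivative (- \<Lambda>)) (at t)" if tD: "t \<notin> D" for t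
  proof -
    obtain y m where tm: "t - x0 = y + of_int m * P" and y: "(- \<delta> < y \<and> y < 0) \<or> (0 < y \<and> y < \<Lambda> * \<delta>)"
      using repr[OF tD] by blast
    have "- \<delta> < y" "y < \<Lambda> * \<delta>" "y \<noteq> 0" using y ld d by auto
    from ubar_deriv[OF L d tm[unfolded P_def] this] show ?thesis unfolding u_def by (cases "y < 0") auto
  qed
  define e where "e = (int_decode :: nat \<Rightarrow> int)"
  define I where "I = (\<lambda>k. {x0 + of_int (e k) * P - \<delta> .. x0 + of_int (e k) * P})"
  have I1: "\<forall>k. \<exists>a. {a<..<a + \<delta>} \<subseteq> I k \<and> I k \<subseteq> {a..a + \<delta>}"
  proof
    fix k show "\<exists>a. {a<..<a + \<delta>} \<subseteq> I k \<and> I k \<subseteq> {a..a + \<delta>}"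
      by (rule exI[of _ "x0 + of_int (e k) * P - \<delta>"]) (auto simp: I_def)
  qed
  have I2: "\<forall>i j. i \<noteq> j \<longrightarrow> finite (I i \<inter> I j) \<and> card (I i \<inter> I j) \<le> 1"
  proof (intro allI impI)
    fix i j :: nat assume ij: "i \<noteq> j"
    have eij: "e i \<noteq> e j" using ij bij_int_decode unfolding e_def bij_def inj_def by blast
    have "I i \<inter> I j = {}"
    proof (rule ccontr)
      assume "I i \<inter> I j \<noteq> {}"
      then obtain x where x: "x \<in> I i" "x \<in> I j" by blast
      have "e i + 1 \<le> e j \<or> e j + 1 \<le> e i" using eij by linarith
      then have "of_int (e i) * P + P \<le> of_int (e j) * P \<or> of_int (e j) * P + P \<le> of_int (e i) * P"
      proof
        assume "e i + 1 \<le> e j"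
        then have "of_int (e i + 1) * P \<le> of_int (e j) * P" using P by (intro mult_right_mono) auto
        then show ?thesis by (simp add: algebra_simps)
      next
        assume "e j + 1 \<le> e i"
        then have "of_int (e j + 1) * P \<le> of_int (e i) * P" using P by (intro mult_right_mono) auto
        then show ?thesis by (simp add: algebra_simps)
      qed
      moreover have "\<delta> < P" using ld unfolding P_def by (simp add: algebra_simps)
      ultimately show False using x unfolding I_def by auto
    qed
    then show "finite (I i \<inter> I j) \<and> card (I i \<inter> I j) \<le> 1" by simp
  qed
  have I3: "AE x in lborel. ((u has_real_derivative (- \<Lambda>)) (at x) \<longleftrightarrow> x \<in> (\<Union>k. I k))"
  proof (rule AE_I')
    show "D \<in> null_sets lborel" unfolding D_def by (intro countable_imp_null_set_lborel) auto
    show "{x \<in> space lborel. \<not> ((u has_real_derivative - \<Lambda>) (at x) = (x \<in> (\<Union>k. I k)))} \<subseteq> D"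
    proof (rule subsetI, rule ccontr)
      fix t assume t: "t \<in> {x \<in> space lborel. \<not> ((u has_real_derivative - \<Lambda>) (at x) = (x \<in> (\<Union>k. I k)))}"
        and tD: "t \<notin> D"
      obtain y m where tm: "t - x0 = y + of_int m * P" and y: "(- \<delta> < y \<and> y < 0) \<or> (0 < y \<and> y < \<Lambda> * \<delta>)"
        using repr[OF tD] by blast
      have yy: "- \<delta> < y" "y < \<Lambda> * \<delta>" "y \<noteq> 0" using y ld d by auto
      note dv = ubar_deriv[OF L d tm[unfolded P_def] yy, folded u_def]
      show False
      proof (cases "y < 0")
        case True
        obtain k where "e k = m" using bij_int_decode unfolding e_def bij_def surj_def by metis
        then have "t \<in> I k" using tm True y unfolding I_def by auto
        then show False using t dv True by auto
      next
        case False
        have "t \<notin> I k" for k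
        proof
          assume "t \<in> I k"
          then have a: "of_int (e k) * P - \<delta> \<le> y + of_int m * P" "y + of_int m * P \<le> of_int (e k) * P"
            using tm unfolding I_def by auto
          have yp: "0 < y" "y < \<Lambda> * \<delta>" using False y by auto
          have "of_int m * P < of_int (e k) * P" using a yp by linarith
          then have "m < e k" using P by simp
          then have "of_int (m + 1) * P \<le> of_int (e k) * P" using P by (intro mult_right_mono) auto
          then show False using a yp unfolding P_def by (simp add: algebra_simps)
        qed
        moreover have "\<not> (u has_real_derivative - \<Lambda>) (at t)"
          using dv False DERIV_unique L by fastforce
        ultimately show False using t by auto
      qed
    qed
  qed
  show ?thesis unfolding admissible_def u_def[symmetric]
    using cont per Dfin deriv I1 I2 I3 by blast
qed

lemma has_integral_lin2:
  fixes a b \<alpha> \<kappa> c :: real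
  assumes ab: "a \<le> b" and k: "\<kappa> \<noteq> 0"
  shows "((\<lambda>x. (\<alpha> + \<kappa> * (x - a))\<^sup>2 - c\<^sup>2) has_integral
           (((\<alpha> + \<kappa> * (b - a)) ^ 3 - \<alpha> ^ 3) / (3 * \<kappa>) - c\<^sup>2 * (b - a))) {a..b}"
proof -
  define F where "F = (\<lambda>x::real. (\<alpha> + \<kappa> * (x - a)) ^ 3 / (3 * \<kappa>) - c\<^sup>2 * x)"
  have "((\<lambda>x. (\<alpha> + \<kappa> * (x - a))\<^sup>2 - c\<^sup>2) has_integral (F b - F a)) {a..b}"
  proof (rule fundamental_theorem_of_calculus[OF ab])
    fix x assume "x \<in> {a..b}"
    have "(F has_real_derivative (3 * (\<alpha> + \<kappa> * (x - a))\<^sup>2 * \<kappa> / (3 * \<kappa>) - c\<^sup>2)) (at x within {a..b})"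
      unfolding F_def by (auto intro!: derivative_eq_intros simp: power2_eq_square)
    moreover have "3 * (\<alpha> + \<kappa> * (x - a))\<^sup>2 * \<kappa> / (3 * \<kappa>) - c\<^sup>2 = (\<alpha> + \<kappa> * (x - a))\<^sup>2 - c\<^sup>2"
      using k by simp
    ultimately show "(F has_vector_derivative (\<alpha> + \<kappa> * (x - a))\<^sup>2 - c\<^sup>2) (at x within {a..b})"
      by (simp add: has_real_derivative_iff_has_vector_derivative)
  qed
  moreover have "F b - F a = ((\<alpha> + \<kappa> * (b - a)) ^ 3 - \<alpha> ^ 3) / (3 * \<kappa>) - c\<^sup>2 * (b - a)"
    unfolding F_def using k by (simp add: diff_divide_distrib algebra_simps)
  ultimately show ?thesis by simp
qed

lemma integral_multi_period:
  fixes f :: "real \<Rightarrow> real"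
  assumes per: "\<And>x. f (x + P) = f x" and cont: "continuous_on UNIV f" and P: "P > 0"
  shows "integral {a..a + real k * P} f = real k * integral {a..a+P} f"
proof (induction k)
  case 0
  then show ?case by simp
next
  case (Suc k)
  have int: "f integrable_on {x..y}" for x y
    by (rule integrable_continuous_interval) (use cont continuous_on_subset in blast)
  have sh: "f \<circ> (+) (real k * P) = f"
  proof
    fix x show "(f \<circ> (+) (real k * P)) x = f x"
      using periodic_int[of f P, OF per, of x "int k"] by (simp add: add.commute)
  qed
  have "integral {a..a + real (Suc k) * P} f = integral {a..a + real k * P} f + integral {a + real k * P..a + real (Suc k) * P} f"
    using Henstock_Kurzweil_Integration.integral_combine[of a "a + real k * P" "a + real (Suc k) * P" f] int P
    by (simp add: algebra_simps)
  also have "integral {a + real k * P..a + real (Suc k) * P} f = integral {a..a+P} f"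
    using integral_shift_Icc_real[of a "a+P" f "real k * P"] sh by (simp add: algebra_simps)
  finally show ?case using Suc by (simp add: algebra_simps)
qed

lemma ubar_val_dec:
  assumes L: "\<Lambda> > 0" and d: "\<delta> > 0" and y: "- \<delta> \<le> y" "y \<le> 0"
  shows "ubar \<Lambda> \<delta> y = - \<Lambda> * y"
proof (cases "y = - \<delta>")
  case True
  have "- \<Lambda> * \<delta> < \<Lambda> * \<delta>" "\<Lambda> * \<delta> \<le> \<Lambda> * \<delta>" using L d by auto
  then have "- \<delta> < \<Lambda> * \<delta>" using L d by (smt (verit) mult_pos_pos)
  then have "ubar \<Lambda> \<delta> (\<Lambda> * \<delta> + of_int (-1) * ((\<Lambda> + 1) * \<delta>)) = (if \<Lambda> * \<delta> < 0 then - \<Lambda> * (\<Lambda> * \<delta>) else \<Lambda> * \<delta>)"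
    using ubar_eq[OF L d, of "\<Lambda> * \<delta>" "-1"] by simp
  moreover have pos: "\<not> (\<Lambda> * \<delta> < 0)" using L d by (simp add: not_less)
  ultimately have "ubar \<Lambda> \<delta> (\<Lambda> * \<delta> + of_int (-1) * ((\<Lambda> + 1) * \<delta>)) = \<Lambda> * \<delta>"
    by (simp only: if_not_P[OF pos] if_False)
  moreover have "\<Lambda> * \<delta> + of_int (-1) * ((\<Lambda> + 1) * \<delta>) = y" using True by (simp add: algebra_simps)
  ultimately show ?thesis using True by simp
next
  case False
  have "0 \<le> \<Lambda>*\<delta>" using L d by simp
  then have "- \<delta> < y" "y \<le> \<Lambda> * \<delta>" using y False by linarith+
  from ubar_eq[OF L d this, of 0] show ?thesis using y by auto
qed

lemma ubar_val_inc:
  assumes L: "\<Lambda> > 0" and d: "\<delta> > 0" and y: "0 \<le> y" "y \<le> \<Lambda> * \<delta>"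
  shows "ubar \<Lambda> \<delta> y = y"
proof -
  have "- \<delta> < y" using y d by simp
  from ubar_eq[OF L d this y(2), of 0] show ?thesis using y by auto
qed

lemma ubar_integral:
  assumes L: "\<Lambda> > 0" and d: "\<delta> > 0" and T: "T = real n * (\<Lambda> + 1) * \<delta>"
  shows "integral {0..T} (\<lambda>x. (ubar \<Lambda> \<delta> (x - x0) - \<Lambda> * \<delta> / 2)\<^sup>2) = T * (\<Lambda> * \<delta> / 2)\<^sup>2 / 3"
proof -
  define c where "c = \<Lambda> * \<delta> / 2"
  define P where "P = (\<Lambda> + 1) * \<delta>"
  have P: "P > 0" using L d unfolding P_def by (intro mult_pos_pos) auto
  define f where "f = (\<lambda>x. (ubar \<Lambda> \<delta> (x - x0) - c)\<^sup>2)"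
  have cont: "continuous_on UNIV f"
    unfolding f_def
    by (intro continuous_at_imp_continuous_on ballI continuous_intros
          continuous_at_compose[OF _ ubar_cont[OF L d], unfolded o_def])
  have perP: "f (x + P) = f x" for x
    using ubar_per[OF L d, of "x - x0" 1] unfolding f_def P_def by (simp add: algebra_simps)
  have perT: "f (x + T) = f x" for x
    using periodic_int[of f P, OF perP, of x "int n"] T unfolding P_def by (simp add: algebra_simps)
  show ?thesis
  proof (cases "n = 0")
    case True
    then show ?thesis using T by simp
  next
    case False
    then have "real n > 0" by simp
    then have Tpos: "T > 0" using T P unfolding P_def by (metis mult.assoc mult_pos_pos)
    have "integral {0..T} f = integral {x0 - \<delta>..x0 - \<delta> + T} f"
      using periodic_integral[OF perT cont Tpos] by simp
    also have "\<dots> = real n * integral {x0 - \<delta>..x0 - \<delta> + P} f"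
      using integral_multi_period[OF perP cont P, of "x0 - \<delta>" n] T unfolding P_def by (simp add: algebra_simps)
    also have "integral {x0 - \<delta>..x0 - \<delta> + P} f = integral {x0 - \<delta>..x0} f + integral {x0..x0 + \<Lambda> * \<delta>} f"
    proof -
      have int: "f integrable_on {x0 - \<delta>..x0 + \<Lambda> * \<delta>}"
        by (rule integrable_continuous_interval) (use cont continuous_on_subset in blast)
      have e: "x0 - \<delta> + P = x0 + \<Lambda> * \<delta>" unfolding P_def by (simp add: algebra_simps)
      show ?thesis unfolding e using Henstock_Kurzweil_Integration.integral_combine[of "x0 - \<delta>" x0 "x0 + \<Lambda> * \<delta>" f] int d L
        by simp
    qed
    also have "integral {x0 - \<delta>..x0} f = 2 * c ^ 3 / (3 * \<Lambda>)"
    proof -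
      have "((\<lambda>x. (c + (- \<Lambda>) * (x - (x0 - \<delta>)))\<^sup>2 - 0\<^sup>2) has_integral
           (((c + (- \<Lambda>) * (x0 - (x0 - \<delta>))) ^ 3 - c ^ 3) / (3 * (- \<Lambda>)) - 0\<^sup>2 * (x0 - (x0 - \<delta>)))) {x0 - \<delta>..x0}"
        using has_integral_lin2[of "x0 - \<delta>" x0 "- \<Lambda>" c 0] d L by simp
      moreover have "f x = (c + (- \<Lambda>) * (x - (x0 - \<delta>)))\<^sup>2 - 0\<^sup>2" if "x \<in> {x0 - \<delta>..x0}" for x
      proof -
        have "ubar \<Lambda> \<delta> (x - x0) = - \<Lambda> * (x - x0)"
          using ubar_val_dec[OF L d, of "x - x0"] that by auto
        then show ?thesis unfolding f_def c_def
          by (simp, intro arg_cong[where f="\<lambda>z. z^2"]) (simp add: algebra_simps)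
      qed
      ultimately have "integral {x0 - \<delta>..x0} f = ((c + (- \<Lambda>) * (x0 - (x0 - \<delta>))) ^ 3 - c ^ 3) / (3 * (- \<Lambda>))"
        using integral_cong[of "{x0 - \<delta>..x0}" f] integral_unique by (metis (no_types, lifting) diff_zero mult_zero_left power_zero_numeral)
      moreover have e: "c + (- \<Lambda>) * (x0 - (x0 - \<delta>)) = - c" unfolding c_def by simp
      ultimately have "integral {x0 - \<delta>..x0} f = ((- c) ^ 3 - c ^ 3) / (3 * (- \<Lambda>))"
        unfolding e[symmetric] by simp
      then show ?thesis using L by (simp add: field_simps)
    qed
    also have "integral {x0..x0 + \<Lambda> * \<delta>} f = 2 * c ^ 3 / 3"
    proof -
      have "((\<lambda>x. (- c + 1 * (x - x0))\<^sup>2 - 0\<^sup>2) has_integral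
           (((- c + 1 * (x0 + \<Lambda> * \<delta> - x0)) ^ 3 - (- c) ^ 3) / (3 * 1) - 0\<^sup>2 * (x0 + \<Lambda> * \<delta> - x0))) {x0..x0 + \<Lambda> * \<delta>}"
        using has_integral_lin2[of x0 "x0 + \<Lambda> * \<delta>" 1 "- c" 0] d L by simp
      moreover have "f x = (- c + 1 * (x - x0))\<^sup>2 - 0\<^sup>2" if "x \<in> {x0..x0 + \<Lambda> * \<delta>}" for x
      proof -
        have "ubar \<Lambda> \<delta> (x - x0) = x - x0"
          using ubar_val_inc[OF L d, of "x - x0"] that by auto
        then show ?thesis unfolding f_def c_def by (simp only:) (simp add: algebra_simps)
      qed
      ultimately have "integral {x0..x0 + \<Lambda> * \<delta>} f = ((- c + 1 * (x0 + \<Lambda> * \<delta> - x0)) ^ 3 - (- c) ^ 3) / (3 * 1)"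
        using integral_cong[of "{x0..x0 + \<Lambda> * \<delta>}" f] integral_unique by (metis (no_types, lifting) diff_zero mult_zero_left power_zero_numeral)
      moreover have "- c + 1 * (x0 + \<Lambda> * \<delta> - x0) = c" unfolding c_def by simp
      ultimately show ?thesis by (simp add: field_simps)
    qed
    finally have "integral {0..T} f = real n * (2 * c ^ 3 / (3 * \<Lambda>) + 2 * c ^ 3 / 3)" .
    also have "\<dots> = T * c\<^sup>2 / 3"
      using T L unfolding c_def by (simp add: field_simps power2_eq_square power3_eq_cube)
    finally show ?thesis unfolding f_def c_def .
  qed
qed

lemma G_bound:
  fixes c \<beta> \<gamma> :: real
  assumes c: "c > 0" and bg: "\<beta> \<le> \<gamma>"
  shows "(\<gamma>^3/3 - c\<^sup>2*\<gamma>) - (\<beta>^3/3 - c\<^sup>2*\<beta>) \<ge> - 4 * c^3 / 3"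
proof -
  have id: "(\<gamma>^3/3 - c\<^sup>2*\<gamma>) - (\<beta>^3/3 - c\<^sup>2*\<beta>) = (\<gamma> - \<beta>) * ((\<gamma>*\<gamma> + \<gamma>*\<beta> + \<beta>*\<beta>) - 3*(c*c)) / 3"
    by (simp add: algebra_simps power2_eq_square power3_eq_cube)
  show ?thesis
  proof (cases "\<gamma> < - 2 * c")
    case True
    then have g: "c \<le> - \<gamma>" "- \<gamma> \<le> - \<beta>" using c bg by auto
    have "c * c \<le> (- \<gamma>) * (- \<gamma>)" using g c by (intro mult_mono) auto
    moreover have "c * c \<le> (- \<beta>) * (- \<beta>)" using g c by (intro mult_mono) auto
    moreover have "c * c \<le> (- \<gamma>) * (- \<beta>)" using g c by (intro mult_mono) auto
    ultimately have "0 \<le> (\<gamma>*\<gamma> + \<gamma>*\<beta> + \<beta>*\<beta>) - 3*(c*c)" by simp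
    then have "0 \<le> (\<gamma> - \<beta>) * ((\<gamma>*\<gamma> + \<gamma>*\<beta> + \<beta>*\<beta>) - 3*(c*c)) / 3" using bg by simp
    moreover have "- 4 * c^3 / 3 \<le> 0" using c by simp
    ultimately show ?thesis using id by linarith
  next
    case False
    show ?thesis
    proof (cases "\<beta> > 2 * c")
      case True
      then have g: "c \<le> \<beta>" "\<beta> \<le> \<gamma>" using c bg by auto
      have "c * c \<le> \<gamma> * \<gamma>" using g c by (intro mult_mono) auto
      moreover have "c * c \<le> \<beta> * \<beta>" using g c by (intro mult_mono) auto
      moreover have "c * c \<le> \<gamma> * \<beta>" using g c by (intro mult_mono) auto
      ultimately have "0 \<le> (\<gamma>*\<gamma> + \<gamma>*\<beta> + \<beta>*\<beta>) - 3*(c*c)" by simp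
      then have "0 \<le> (\<gamma> - \<beta>) * ((\<gamma>*\<gamma> + \<gamma>*\<beta> + \<beta>*\<beta>) - 3*(c*c)) / 3" using bg by simp
      moreover have "- 4 * c^3 / 3 \<le> 0" using c by simp
      ultimately show ?thesis using id by linarith
    next
      case False2: False
      have "0 \<le> (\<gamma> - c)\<^sup>2 * (\<gamma> + 2 * c)" using False by simp
      moreover have "0 \<le> (\<beta> + c)\<^sup>2 * (2 * c - \<beta>)" using False2 by simp
      moreover have "(\<gamma>^3/3 - c\<^sup>2*\<gamma>) - (\<beta>^3/3 - c\<^sup>2*\<beta>) + 4 * c^3 / 3
          = ((\<gamma> - c)\<^sup>2 * (\<gamma> + 2 * c) + (\<beta> + c)\<^sup>2 * (2 * c - \<beta>)) / 3"
        by (simp add: algebra_simps power2_eq_square power3_eq_cube)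
      ultimately have "0 \<le> (\<gamma>^3/3 - c\<^sup>2*\<gamma>) - (\<beta>^3/3 - c\<^sup>2*\<beta>) + 4 * c^3 / 3" by simp
      then show ?thesis by linarith
    qed
  qed
qed

definition toothE :: "real \<Rightarrow> real \<Rightarrow> real \<Rightarrow> real \<Rightarrow> real" where
  "toothE \<Lambda> \<delta> h g = (((h + (- \<Lambda>) * \<delta>) ^ 3 - h ^ 3) / (3 * (- \<Lambda>)) - (\<Lambda> * \<delta> / 2)\<^sup>2 * \<delta>)
      + (((h - \<Lambda> * \<delta> + 1 * g) ^ 3 - (h - \<Lambda> * \<delta>) ^ 3) / (3 * 1) - (\<Lambda> * \<delta> / 2)\<^sup>2 * g)"

lemma tooth_bound:
  fixes \<Lambda> \<delta> h g :: real
  assumes L: "\<Lambda> > 0" and d: "\<delta> > 0" and g: "g \<ge> 0"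
  shows "toothE \<Lambda> \<delta> h g \<ge> - 4 * (\<Lambda> * \<delta> / 2)^3 / 3 * (1 / \<Lambda> + 1)"
    and "toothE \<Lambda> \<delta> h g = - 4 * (\<Lambda> * \<delta> / 2)^3 / 3 * (1 / \<Lambda> + 1) \<Longrightarrow> h = \<Lambda> * \<delta> / 2 \<and> g = \<Lambda> * \<delta>"
proof -
  define c where "c = \<Lambda> * \<delta> / 2"
  have c: "c > 0" using L d unfolding c_def by simp
  have dl: "\<delta> = 2 * c / \<Lambda>" "\<Lambda> * \<delta> = 2 * c" using L unfolding c_def by auto
  define E1 where "E1 = ((h + (- \<Lambda>) * \<delta>) ^ 3 - h ^ 3) / (3 * (- \<Lambda>)) - c\<^sup>2 * \<delta>"
  define \<beta> where "\<beta> = h - 2 * c"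
  define E2 where "E2 = ((\<beta> + g)^3/3 - c\<^sup>2*(\<beta> + g)) - (\<beta>^3/3 - c\<^sup>2*\<beta>)"
  have e1: "h + (- \<Lambda>) * \<delta> = h - 2*c" using dl by simp
  have e2: "h - \<Lambda> * \<delta> = h - 2*c" using dl by simp
  have split: "toothE \<Lambda> \<delta> h g = E1 + E2"
    unfolding toothE_def E1_def E2_def \<beta>_def c_def[symmetric] e1 e2
    by (simp add: field_simps power2_eq_square power3_eq_cube)
  have E1: "E1 = (2 * c * (h - c)\<^sup>2 - 4 * c^3 / 3) / \<Lambda>"
  proof -
    have "E1 = ((h - 2 * c) ^ 3 - h ^ 3) / (3 * (- \<Lambda>)) - c\<^sup>2 * (2 * c / \<Lambda>)"
      unfolding E1_def e1 using dl by simp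
    also have "\<dots> = (2 * c * (h - c)\<^sup>2 - 4 * c^3 / 3) / \<Lambda>"
      using L by (simp add: field_simps power2_eq_square power3_eq_cube)
    finally show ?thesis .
  qed
  have E1b: "E1 \<ge> - 4 * c^3 / 3 / \<Lambda>"
  proof -
    have "0 \<le> 2*c*(h-c)\<^sup>2" using c by simp
    then have "- 4*c^3/3 \<le> 2*c*(h-c)\<^sup>2 - 4*c^3/3" by simp
    then have "(- 4*c^3/3)/\<Lambda> \<le> (2*c*(h-c)\<^sup>2 - 4*c^3/3)/\<Lambda>" using L by (intro divide_right_mono) auto
    then show ?thesis unfolding E1 by simp
  qed
  have E2b: "E2 \<ge> - 4 * c^3 / 3"
    unfolding E2_def using G_bound[OF c, of \<beta> "\<beta> + g"] g by simp
  have m: "- 4 * (\<Lambda> * \<delta> / 2)^3 / 3 * (1 / \<Lambda> + 1) = - 4 * c^3 / 3 / \<Lambda> + - 4 * c^3 / 3"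
    unfolding c_def using L by (simp add: field_simps)
  show "toothE \<Lambda> \<delta> h g \<ge> - 4 * (\<Lambda> * \<delta> / 2)^3 / 3 * (1 / \<Lambda> + 1)"
    using split m E1b E2b by linarith
  assume eq: "toothE \<Lambda> \<delta> h g = - 4 * (\<Lambda> * \<delta> / 2)^3 / 3 * (1 / \<Lambda> + 1)"
  then have e1: "E1 = - 4 * c^3 / 3 / \<Lambda>" and e2: "E2 = - 4 * c^3 / 3"
    using split m E1b E2b by linarith+
  from e1 have "2 * c * (h - c)\<^sup>2 / \<Lambda> = 0" unfolding E1 using L by (simp add: field_simps)
  then have hc: "h = c" using c L by simp
  then have b: "\<beta> = - c" unfolding \<beta>_def by simp
  have "E2 + 4 * c^3 / 3 = (g - 2 * c)\<^sup>2 * (g + c) / 3"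
    unfolding E2_def b by (simp add: field_simps power2_eq_square power3_eq_cube)
  then have "(g - 2 * c)\<^sup>2 * (g + c) = 0" using e2 by simp
  moreover have "g + c > 0" using g c by simp
  ultimately have "g = 2 * c" by simp
  then show "h = \<Lambda> * \<delta> / 2 \<and> g = \<Lambda> * \<delta>" using hc dl unfolding c_def by simp
qed

lemma core:
  fixes u :: "real \<Rightarrow> real" and a :: "nat \<Rightarrow> real" and \<Lambda> \<delta> T :: real and L :: nat
  assumes L: "\<Lambda> > 0" and d: "\<delta> > 0" and L1: "L \<ge> 1" and T: "T = real L * (\<Lambda> + 1) * \<delta>"
    and cont: "continuous_on UNIV u" and per: "\<forall>x. u (x + T) = u x"
    and sep: "\<forall>i j. i \<noteq> j \<longrightarrow> \<delta> \<le> \<bar>a i - a j\<bar>"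
    and dec: "\<forall>k s. 0 \<le> s \<longrightarrow> s \<le> \<delta> \<longrightarrow> u (a k + s) = u (a k) - \<Lambda> * s"
    and inc: "\<forall>x y. x \<le> y \<longrightarrow> (\<forall>k. a k + \<delta> \<le> x \<or> y \<le> a k) \<longrightarrow> u y = u x + (y - x)"
  shows "integral {0..T} (\<lambda>x. (u x)\<^sup>2) \<ge> T * (\<Lambda> * \<delta> / 2)\<^sup>2 / 3"
    and "integral {0..T} (\<lambda>x. (u x)\<^sup>2) = T * (\<Lambda> * \<delta> / 2)\<^sup>2 / 3 \<Longrightarrow>
          (\<forall>t. u t = ubar \<Lambda> \<delta> (t - (a 0 + \<delta>)) - \<Lambda> * \<delta> / 2)"
proof -
  define P where "P = (\<Lambda> + 1) * \<delta>"
  have P: "P > 0" using L d unfolding P_def by (intro mult_pos_pos) auto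
  have dP: "\<delta> < P" using L d unfolding P_def by (simp add: algebra_simps)
  have TP: "T = real L * P" using T unfolding P_def by simp
  have Tpos: "T > 0" using TP P L1 by simp
  define c where "c = \<Lambda> * \<delta> / 2"
  have c: "c > 0" using L d unfolding c_def by simp
  define p where "p = a 0"
  define q where "q = p + T"
  define A where "A = {x. \<exists>k. x = a k \<and> p \<le> x \<and> x < q}"
  define N where "N = nxt A q"
  have pA: "p \<in> A" unfolding A_def p_def q_def using Tpos by auto
  have Asub: "A \<subseteq> {p..<q}" unfolding A_def by auto
  have sepA: "\<delta> \<le> \<bar>x - y\<bar>" if xy: "x \<in> A" "y \<in> A" "x \<noteq> y" for x y
  proof -
    obtain k j where "x = a k" "y = a j" using xy unfolding A_def by auto
    moreover have "k \<noteq> j" using xy calculation by auto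
    ultimately show ?thesis using sep by auto
  qed
  have finA: "finite A"
  proof -
    have "inj_on (\<lambda>x. \<lfloor>x / \<delta>\<rfloor>) A"
    proof (rule inj_onI, rule ccontr)
      fix x y assume xy: "x \<in> A" "y \<in> A" "\<lfloor>x / \<delta>\<rfloor> = \<lfloor>y / \<delta>\<rfloor>" "x \<noteq> y"
      have "\<bar>x / \<delta> - y / \<delta>\<bar> < 1" using xy(3) by linarith
      then have "\<bar>x - y\<bar> < \<delta>" using d by (simp add: diff_divide_distrib[symmetric] field_simps)
      then show False using sepA[OF xy(1,2,4)] by simp
    qed
    moreover have "(\<lambda>x. \<lfloor>x / \<delta>\<rfloor>) ` A \<subseteq> {\<lfloor>p / \<delta>\<rfloor>..\<lfloor>q / \<delta>\<rfloor>}"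
    proof
      fix z assume "z \<in> (\<lambda>x. \<lfloor>x / \<delta>\<rfloor>) ` A"
      then obtain x where x: "x \<in> A" "z = \<lfloor>x / \<delta>\<rfloor>" by auto
      then have "p \<le> x" "x \<le> q" using Asub by auto
      then have "\<lfloor>p / \<delta>\<rfloor> \<le> \<lfloor>x / \<delta>\<rfloor>" "\<lfloor>x / \<delta>\<rfloor> \<le> \<lfloor>q / \<delta>\<rfloor>"
        using d by (auto intro!: floor_mono divide_right_mono)
      then show "z \<in> {\<lfloor>p / \<delta>\<rfloor>..\<lfloor>q / \<delta>\<rfloor>}" using x by simp
    qed
    ultimately show ?thesis by (meson finite_atLeastAtMost_int finite_imageD finite_subset)
  qed
  have Nprops: "x < N x \<and> N x \<le> q \<and> (N x = q \<or> N x \<in> A) \<and> (\<forall>y\<in>A. x < y \<longrightarrow> N x \<le> y)"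
    if xA: "x \<in> A" for x
  proof -
    define M where "M = {y\<in>A. x < y} \<union> {q}"
    have fM: "finite M" "M \<noteq> {}" unfolding M_def using finA by auto
    have NM: "N x = Min M" unfolding N_def nxt_def M_def by simp
    have xq: "x < q" using xA Asub by auto
    have "x < Min M" using fM xq by (subst Min_gr_iff) (auto simp: M_def)
    moreover have "Min M \<le> q" using fM by (intro Min_le) (auto simp: M_def)
    moreover have "Min M \<in> M" using fM by (rule Min_in)
    moreover have "\<forall>y\<in>A. x < y \<longrightarrow> Min M \<le> y" using fM by (auto intro: Min_le simp: M_def)
    ultimately show ?thesis unfolding NM M_def by auto
  qed
  have Nfull_of_in: "x + \<delta> \<le> N x" if "x \<in> A" "N x \<in> A" for x
    using sepA[OF that] Nprops[OF that(1)] by auto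
  have decx: "u (x + s) = u x - \<Lambda> * s" if "x \<in> A" "0 \<le> s" "s \<le> \<delta>" for x s
    using that dec unfolding A_def by auto
  have gapfree: "\<forall>k. a k + \<delta> \<le> s \<or> t \<le> a k" if xA: "x \<in> A" and st: "x + \<delta> \<le> s" "t \<le> N x" for x s t
  proof
    fix k
    obtain j where j: "x = a j" using xA unfolding A_def by auto
    show "a k + \<delta> \<le> s \<or> t \<le> a k"
    proof (cases "a k \<le> x")
      case True
      show ?thesis
      proof (cases "k = j")
        case True then show ?thesis using j st by auto
      next
        case False
        then have "\<delta> \<le> \<bar>a k - a j\<bar>" using sep by auto
        then show ?thesis using True j st by auto
      qed
    next
      case False
      show ?thesis
      proof (cases "a k < q")
        case True
        have "p \<le> x" using xA Asub by auto
        then have "a k \<in> A" using True False unfolding A_def by auto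
        then have "N x \<le> a k" using Nprops[OF xA] False by auto
        then show ?thesis using st by auto
      next
        case False
        then show ?thesis using Nprops[OF xA] st by auto
      qed
    qed
  qed
  have incx: "u t = u (x + \<delta>) + (t - (x + \<delta>))" if xA: "x \<in> A" and t: "x + \<delta> \<le> t" "t \<le> N x" for x t
    using inc gapfree[OF xA order_refl t(2)] t by auto
  have incr: "u (N x) - u x = (N x - x) - (\<Lambda> + 1) * min \<delta> (N x - x)" if xA: "x \<in> A" for x
  proof (cases "x + \<delta> \<le> N x")
    case True
    have "u (N x) = u (x + \<delta>) + (N x - (x + \<delta>))" using incx[OF xA True order_refl] .
    moreover have "u (x + \<delta>) = u x - \<Lambda> * \<delta>" using decx[OF xA] d by simp
    ultimately show ?thesis using True by (simp add: algebra_simps min_def)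
  next
    case False
    have "u (x + (N x - x)) = u x - \<Lambda> * (N x - x)" using decx[OF xA, of "N x - x"] Nprops[OF xA] False by simp
    then show ?thesis using False by (simp add: algebra_simps min_def)
  qed
  \<comment> \<open>counting: all teeth are full and there are exactly L of them\<close>
  have tel_u: "(\<Sum>x\<in>A. u (N x) - u x) = 0"
    using telescope[OF finA Asub pA, of u] per unfolding N_def q_def by simp
  have tel_id: "(\<Sum>x\<in>A. N x - x) = T"
    using telescope[OF finA Asub pA, of "\<lambda>x. x"] unfolding N_def q_def by simp
  have summin: "(\<Sum>x\<in>A. min \<delta> (N x - x)) = real L * \<delta>"
  proof -
    have "0 = (\<Sum>x\<in>A. (N x - x) - (\<Lambda> + 1) * min \<delta> (N x - x))"
      using tel_u incr by (metis (no_types, lifting) sum.cong)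
    also have "\<dots> = T - (\<Lambda> + 1) * (\<Sum>x\<in>A. min \<delta> (N x - x))"
      using tel_id by (simp add: sum_subtractf sum_distrib_left)
    finally have "(\<Lambda> + 1) * (\<Sum>x\<in>A. min \<delta> (N x - x)) = (\<Lambda> + 1) * (real L * \<delta>)"
      using T by (simp add: algebra_simps)
    moreover have "\<Lambda> + 1 \<noteq> 0" using L by simp
    ultimately show ?thesis by (metis mult_left_cancel)
  qed
  define M where "M = Max A"
  have MA: "M \<in> A" unfolding M_def using finA pA by (intro Max_in) auto
  have notM_full: "min \<delta> (N x - x) = \<delta>" if "x \<in> A" "x \<noteq> M" for x
  proof -
    have "x < M" using that finA M_def by (simp add: order_le_neq_trans)
    then have "N x \<le> M" using Nprops[OF that(1)] MA by auto
    then have "N x \<noteq> q" using MA Asub by auto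
    then have "N x \<in> A" using Nprops[OF that(1)] by auto
    then show ?thesis using Nfull_of_in[OF that(1)] by simp
  qed
  define r where "r = min \<delta> (N M - M)"
  have r: "0 < r" "r \<le> \<delta>" unfolding r_def using Nprops[OF MA] d by auto
  have cardA1: "card A \<ge> 1" using finA pA by (metis One_nat_def Suc_leI card_gt_0_iff empty_iff)
  have "(\<Sum>x\<in>A. min \<delta> (N x - x)) = r + (\<Sum>x\<in>A - {M}. min \<delta> (N x - x))"
    unfolding r_def using finA MA by (simp add: sum.remove)
  also have "(\<Sum>x\<in>A - {M}. min \<delta> (N x - x)) = (\<Sum>x\<in>A - {M}. \<delta>)"
    using notM_full by (intro sum.cong) auto
  also have "\<dots> = (real (card A) - 1) * \<delta>" using finA MA cardA1 by (simp add: of_nat_diff)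
  finally have "r = (real L + 1 - real (card A)) * \<delta>" using summin by (simp add: algebra_simps)
  then have rz: "r = (real L + 1 - real (card A)) * \<delta>" .
  then have h: "0 < real L + 1 - real (card A)" "real L + 1 - real (card A) \<le> 1"
    using r d by (auto simp: zero_less_mult_iff mult_le_cancel_right1)
  then have "real (card A) < real (L + 1)" "real L \<le> real (card A)" by simp_all
  then have "card A < L + 1" "L \<le> card A" by (simp_all only: of_nat_less_iff of_nat_le_iff)
  then have cardA: "card A = L" by simp
  have rd: "r = \<delta>" using rz cardA by simp
  have full: "x + \<delta> \<le> N x" if "x \<in> A" for x
  proof (cases "x = M")
    case True then show ?thesis using rd unfolding r_def by (simp add: min_def split: if_splits)
  next
    case False then show ?thesis using notM_full[OF that False] by (simp add: min_def split: if_splits)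
  qed
  define f where "f = (\<lambda>x. (u x)\<^sup>2 - c\<^sup>2)"
  have contf: "continuous_on UNIV f" unfolding f_def by (intro continuous_intros cont)
  have intf: "f integrable_on {x..y}" for x y
    by (rule integrable_continuous_interval) (use contf continuous_on_subset in blast)
  have tooth: "integral {x..N x} f = toothE \<Lambda> \<delta> (u x) (N x - x - \<delta>)" if xA: "x \<in> A" for x
  proof -
    have f1: "(f has_integral (((u x + (- \<Lambda>) * (x + \<delta> - x)) ^ 3 - (u x) ^ 3) / (3 * (- \<Lambda>)) - c\<^sup>2 * (x + \<delta> - x))) {x..x+\<delta>}"
    proof -
      have "((\<lambda>t. (u x + (- \<Lambda>) * (t - x))\<^sup>2 - c\<^sup>2) has_integral (((u x + (- \<Lambda>) * (x + \<delta> - x)) ^ 3 - (u x) ^ 3) / (3 * (- \<Lambda>)) - c\<^sup>2 * (x + \<delta> - x))) {x..x+\<delta>}"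
        by (rule has_integral_lin2) (use d L in auto)
      moreover have eqf: "f t = (u x + (- \<Lambda>) * (t - x))\<^sup>2 - c\<^sup>2" if "t \<in> {x..x+\<delta>}" for t
      proof -
        have "u t = u x - \<Lambda> * (t - x)" using decx[OF xA, of "t - x"] that by simp
        then show ?thesis unfolding f_def by simp
      qed
      ultimately show ?thesis by (simp only: has_integral_cong[OF eqf])
    qed
    have f2: "(f has_integral (((u x - \<Lambda> * \<delta> + 1 * (N x - (x + \<delta>))) ^ 3 - (u x - \<Lambda> * \<delta>) ^ 3) / (3 * 1) - c\<^sup>2 * (N x - (x + \<delta>)))) {x+\<delta>..N x}"
    proof -
      have "((\<lambda>t. (u x - \<Lambda> * \<delta> + 1 * (t - (x + \<delta>)))\<^sup>2 - c\<^sup>2) has_integral (((u x - \<Lambda> * \<delta> + 1 * (N x - (x + \<delta>))) ^ 3 - (u x - \<Lambda> * \<delta>) ^ 3) / (3 * 1) - c\<^sup>2 * (N x - (x + \<delta>)))) {x+\<delta>..N x}"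
        by (rule has_integral_lin2) (use full[OF xA] in auto)
      moreover have eqf: "f t = (u x - \<Lambda> * \<delta> + 1 * (t - (x + \<delta>)))\<^sup>2 - c\<^sup>2" if "t \<in> {x+\<delta>..N x}" for t
      proof -
        have "u t = u (x + \<delta>) + (t - (x + \<delta>))" using incx[OF xA, of t] that by simp
        moreover have "u (x + \<delta>) = u x - \<Lambda> * \<delta>" using decx[OF xA] d by simp
        ultimately show ?thesis unfolding f_def by simp
      qed
      ultimately show ?thesis by (simp only: has_integral_cong[OF eqf])
    qed
    have "integral {x..N x} f = integral {x..x+\<delta>} f + integral {x+\<delta>..N x} f"
      using Henstock_Kurzweil_Integration.integral_combine[of x "x+\<delta>" "N x" f] intf full[OF xA] d by simp
    also have "\<dots> = toothE \<Lambda> \<delta> (u x) (N x - x - \<delta>)"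
    proof -
      have e1: "x + \<delta> - x = \<delta>" "N x - (x + \<delta>) = N x - x - \<delta>" by simp_all
      show ?thesis
        using integral_unique[OF f1] integral_unique[OF f2] unfolding toothE_def c_def e1
        by (simp only:)
    qed
    finally show ?thesis .
  qed
  have sumint: "integral {p..q} f = (\<Sum>x\<in>A. integral {x..N x} f)"
  proof -
    have "(\<Sum>x\<in>A. integral {p..N x} f - integral {p..x} f) = integral {p..q} f - integral {p..p} f"
      using telescope[OF finA Asub pA, of "\<lambda>t. integral {p..t} f"] unfolding N_def by simp
    moreover have "integral {p..N x} f - integral {p..x} f = integral {x..N x} f" if "x \<in> A" for x
      using Henstock_Kurzweil_Integration.integral_combine[of p x "N x" f] intf that Asub Nprops[OF that]
      by (auto simp: algebra_simps)
    ultimately show ?thesis by simp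
  qed
  define m0 where "m0 = - 4 * c^3 / 3 * (1 / \<Lambda> + 1)"
  have toothb: "integral {x..N x} f \<ge> m0" if "x \<in> A" for x
    unfolding tooth[OF that] m0_def c_def using tooth_bound(1)[OF L d, of "N x - x - \<delta>" "u x"] full[OF that] by simp
  have intu: "integral {0..T} (\<lambda>x. (u x)\<^sup>2) = integral {p..q} f + c\<^sup>2 * T"
  proof -
    have peru: "(u (x + T))\<^sup>2 = (u x)\<^sup>2" for x using per by simp
    have "integral {0..T} (\<lambda>x. (u x)\<^sup>2) = integral {p..p+T} (\<lambda>x. (u x)\<^sup>2)"
      using periodic_integral[of "\<lambda>x. (u x)\<^sup>2" T, OF peru _ Tpos] cont
      by (simp add: continuous_intros)
    moreover have "integral {p..q} f = integral {p..q} (\<lambda>x. (u x)\<^sup>2) - integral {p..q} (\<lambda>x. c\<^sup>2)"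
      unfolding f_def
      by (rule integral_diff) (auto intro!: integrable_continuous_interval continuous_intros
          continuous_on_subset[OF cont])
    moreover have "integral {p..q} (\<lambda>x. c\<^sup>2) = c\<^sup>2 * T" using Tpos unfolding q_def by simp
    ultimately show ?thesis unfolding q_def using less_imp_le[OF Tpos] by simp
  qed
  have key: "real L * m0 + c\<^sup>2 * T = T * c\<^sup>2 / 3"
    unfolding m0_def T c_def using L by (simp add: field_simps power2_eq_square power3_eq_cube)
  have lower: "integral {p..q} f \<ge> real L * m0"
  proof -
    have "(\<Sum>x\<in>A. m0) \<le> (\<Sum>x\<in>A. integral {x..N x} f)" using toothb by (intro sum_mono) auto
    then show ?thesis using sumint cardA by simp
  qed
  show "integral {0..T} (\<lambda>x. (u x)\<^sup>2) \<ge> T * (\<Lambda> * \<delta> / 2)\<^sup>2 / 3"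
    using intu key lower unfolding c_def by linarith
  assume eq: "integral {0..T} (\<lambda>x. (u x)\<^sup>2) = T * (\<Lambda> * \<delta> / 2)\<^sup>2 / 3"
  have "(\<Sum>x\<in>A. integral {x..N x} f - m0) = 0"
  proof -
    have "integral {p..q} f = real L * m0" using eq intu key unfolding c_def by linarith
    then show ?thesis using sumint cardA by (simp add: sum_subtractf)
  qed
  then have all0: "\<forall>x\<in>A. integral {x..N x} f - m0 = 0"
    using sum_nonneg_eq_0_iff[OF finA, of "\<lambda>x. integral {x..N x} f - m0"] toothb by auto
  have teq: "u x = c \<and> N x = x + P" if xA: "x \<in> A" for x
  proof -
    have "integral {x..N x} f = m0" using all0 xA by auto
    then have "toothE \<Lambda> \<delta> (u x) (N x - x - \<delta>) = - 4 * (\<Lambda> * \<delta> / 2)^3 / 3 * (1 / \<Lambda> + 1)"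
      using tooth[OF xA] unfolding m0_def c_def by simp
    then have "u x = \<Lambda> * \<delta> / 2 \<and> N x - x - \<delta> = \<Lambda> * \<delta>"
      using tooth_bound(2)[OF L d, of "N x - x - \<delta>" "u x"] full[OF xA] by simp
    then show ?thesis unfolding c_def P_def by (simp add: algebra_simps)
  qed
  have inA: "p + real i * P \<in> A" if "i < L" for i
    using that
  proof (induction i)
    case 0 then show ?case using pA by simp
  next
    case (Suc i)
    then have x: "p + real i * P \<in> A" by simp
    have "N (p + real i * P) = p + real (Suc i) * P" using teq[OF x] by (simp add: algebra_simps)
    moreover have "p + real (Suc i) * P < q"
      using Suc.prems P unfolding q_def TP by (simp add: mult_strict_right_mono)
    ultimately show ?case using Nprops[OF x] by auto
  qed
  have Aeq: "A = (\<lambda>i. p + real i * P) ` {..<L}"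
  proof -
    have sub: "(\<lambda>i. p + real i * P) ` {..<L} \<subseteq> A" using inA by auto
    have "inj_on (\<lambda>i. p + real i * P) {..<L}" using P by (auto intro!: inj_onI)
    then have "card ((\<lambda>i. p + real i * P) ` {..<L}) = L" by (simp add: card_image)
    then show ?thesis using card_subset_eq[OF finA sub] cardA by simp
  qed
  define V where "V = (\<lambda>t. ubar \<Lambda> \<delta> (t - (a 0 + \<delta>)) - c)"
  have Vper: "V (t + T) = V t" for t
  proof -
    have e: "t + T - (a 0 + \<delta>) = (t - (a 0 + \<delta>)) + real L * ((\<Lambda> + 1) * \<delta>)" using TP P_def by simp
    have "ubar \<Lambda> \<delta> ((t - (a 0 + \<delta>)) + real L * ((\<Lambda> + 1) * \<delta>)) = ubar \<Lambda> \<delta> (t - (a 0 + \<delta>))"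
      using ubar_per[OF L d, of "t - (a 0 + \<delta>)" "int L"] by simp
    then show ?thesis unfolding V_def e by simp
  qed
  have onW: "u t = V t" if t: "p \<le> t" "t < q" for t
  proof -
    define i where "i = nat \<lfloor>(t - p) / P\<rfloor>"
    have "0 \<le> (t - p) / P" using t P by simp
    then have i: "real i \<le> (t - p) / P" "(t - p) / P < real i + 1" unfolding i_def by linarith+
    then have ti: "p + real i * P \<le> t" "t < p + real i * P + P" using P by (auto simp: field_simps)
    have "(t - p) / P < real L" using t P unfolding q_def TP by (simp add: field_simps)
    then have "i < L" using i by linarith
    then have xA: "p + real i * P \<in> A" by (rule inA)
    define x where "x = p + real i * P"
    define s where "s = t - x"
    have s: "0 \<le> s" "s < P" using ti unfolding s_def x_def by auto
    have Vs: "V t = ubar \<Lambda> \<delta> (s - \<delta>) - c"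
    proof -
      have e: "t - (a 0 + \<delta>) = (s - \<delta>) + real i * ((\<Lambda> + 1) * \<delta>)"
        unfolding s_def x_def p_def P_def by simp
      have "ubar \<Lambda> \<delta> ((s - \<delta>) + real i * ((\<Lambda> + 1) * \<delta>)) = ubar \<Lambda> \<delta> (s - \<delta>)"
        using ubar_per[OF L d, of "s - \<delta>" "int i"] by simp
      then show ?thesis unfolding V_def e by simp
    qed
    show ?thesis
    proof (cases "s \<le> \<delta>")
      case True
      have "u t = u x - \<Lambda> * s" using decx[OF xA[folded x_def], of s] True s unfolding s_def by simp
      moreover have "ubar \<Lambda> \<delta> (s - \<delta>) = - \<Lambda> * (s - \<delta>)" using ubar_val_dec[OF L d] True s by simp
      ultimately show ?thesis using Vs teq[OF xA[folded x_def]] unfolding c_def by (simp add: algebra_simps)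
    next
      case False
      have Nx: "N x = x + P" using teq[OF xA[folded x_def]] by simp
      have "u t = u (x + \<delta>) + (t - (x + \<delta>))" using incx[OF xA[folded x_def], of t] False s Nx unfolding s_def by simp
      moreover have "u (x + \<delta>) = u x - \<Lambda> * \<delta>" using decx[OF xA[folded x_def]] d by simp
      moreover have "ubar \<Lambda> \<delta> (s - \<delta>) = s - \<delta>"
        using ubar_val_inc[OF L d] False s unfolding P_def by (simp add: algebra_simps)
      ultimately show ?thesis using Vs teq[OF xA[folded x_def]] unfolding c_def s_def by (simp add: algebra_simps)
    qed
  qed
  show "\<forall>t. u t = ubar \<Lambda> \<delta> (t - (a 0 + \<delta>)) - \<Lambda> * \<delta> / 2"
  proof
    fix t
    define n where "n = \<lfloor>(t - p) / T\<rfloor>"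
    have "of_int n \<le> (t - p) / T" "(t - p) / T < of_int n + 1" unfolding n_def by linarith+
    then have n: "p \<le> t - of_int n * T" "t - of_int n * T < q" using Tpos unfolding q_def by (auto simp: field_simps)
    have "u t = u (t - of_int n * T)"
      using periodic_int[of u T, of "t - of_int n * T" n] per by simp
    also have "\<dots> = V (t - of_int n * T)" using onW[OF n] .
    also have "\<dots> = V t" using periodic_int[of V T, OF Vper, of "t - of_int n * T" n] by simp
    finally show "u t = ubar \<Lambda> \<delta> (t - (a 0 + \<delta>)) - \<Lambda> * \<delta> / 2" unfolding V_def c_def .
  qed
qed

lemma adm_props:
  fixes u :: "real \<Rightarrow> real" and \<Lambda> \<delta> T :: real
  assumes L: "\<Lambda> > 0" and d: "\<delta> > 0" and adm: "admissible T \<Lambda> \<delta> u"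
  shows "\<exists>a::nat \<Rightarrow> real. (\<forall>i j. i \<noteq> j \<longrightarrow> \<delta> \<le> \<bar>a i - a j\<bar>)
     \<and> (\<forall>k s. 0 \<le> s \<longrightarrow> s \<le> \<delta> \<longrightarrow> u (a k + s) = u (a k) - \<Lambda> * s)
     \<and> (\<forall>x y. x \<le> y \<longrightarrow> (\<forall>k. a k + \<delta> \<le> x \<or> y \<le> a k) \<longrightarrow> u y = u x + (y - x))"
proof -
  from adm obtain D :: "real set" and I :: "nat \<Rightarrow> real set" where cont: "continuous_on UNIV u"
    and Dfin: "\<forall>a b. finite (D \<inter> {a..b})"
    and Dder: "\<forall>x. x \<notin> D \<longrightarrow> (u has_real_derivative 1) (at x) \<or> (u has_real_derivative (- \<Lambda>)) (at x)"
    and I1: "\<forall>k. \<exists>a. {a<..<a + \<delta>} \<subseteq> I k \<and> I k \<subseteq> {a..a + \<delta>}"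
    and I2: "\<forall>i j. i \<noteq> j \<longrightarrow> finite (I i \<inter> I j) \<and> card (I i \<inter> I j) \<le> 1"
    and I3: "AE x in lborel. ((u has_real_derivative (- \<Lambda>)) (at x) \<longleftrightarrow> x \<in> (\<Union>k. I k))"
    unfolding admissible_def by blast
  from I1 obtain a where a: "\<forall>k. {a k<..<a k + \<delta>} \<subseteq> I k \<and> I k \<subseteq> {a k..a k + \<delta>}"
    by (metis choice)
  define S where "S = (\<Union>k. I k)"
  have sep: "\<forall>i j. i \<noteq> j \<longrightarrow> \<delta> \<le> \<bar>a i - a j\<bar>"
  proof (intro allI impI, rule ccontr)
    fix i j :: nat assume ij: "i \<noteq> j" and lt: "\<not> \<delta> \<le> \<bar>a i - a j\<bar>"
    define lo where "lo = max (a i) (a j)"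
    define hi where "hi = min (a i + \<delta>) (a j + \<delta>)"
    have "lo < hi" using lt d unfolding lo_def hi_def by auto
    then have "infinite {lo<..<hi}" by simp
    moreover have "{lo<..<hi} \<subseteq> I i \<inter> I j" using a unfolding lo_def hi_def by fastforce
    ultimately show False using I2 ij finite_subset by blast
  qed
  define g where "g = (\<lambda>t. if t \<in> S then - \<Lambda> else 1)"
  define h where "h = (\<lambda>t. if (u has_real_derivative (- \<Lambda>)) (at t) then - \<Lambda> else (1::real))"
  from I3 obtain N where N: "{x \<in> space lborel. \<not> ((u has_real_derivative (- \<Lambda>)) (at x) \<longleftrightarrow> x \<in> S)} \<subseteq> N"
    "emeasure lborel N = 0" "N \<in> sets lborel"
    unfolding S_def by (elim AE_E) auto
  have negN: "negligible N"
    unfolding negligible_iff_null_sets using N by (intro null_sets_completionI) (simp add: null_setsI)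
  have ftc: "(g has_integral (u y - u x)) {x..y}" if xy: "x \<le> y" for x y
  proof -
    have hint: "(h has_integral (u y - u x)) {x..y}"
    proof (rule fundamental_theorem_of_calculus_interior_strong[of "D \<inter> {x..y}"])
      show "finite (D \<inter> {x..y})" using Dfin by blast
      show "x \<le> y" by fact
      show "continuous_on {x..y} u" using cont continuous_on_subset by blast
      fix t assume t: "t \<in> {x<..<y} - D \<inter> {x..y}"
      then have "t \<notin> D" by auto
      show "(u has_vector_derivative h t) (at t)"
      proof (cases "(u has_real_derivative (- \<Lambda>)) (at t)")
        case True
        then have "h t = - \<Lambda>" unfolding h_def by simp
        then show ?thesis using True by (simp add: has_real_derivative_iff_has_vector_derivative)
      next
        case False
        then have "(u has_real_derivative 1) (at t)" using Dder \<open>t \<notin> D\<close> by blast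
        moreover have "h t = 1" using False unfolding h_def by simp
        ultimately show ?thesis by (simp add: has_real_derivative_iff_has_vector_derivative)
      qed
    qed
    have gh: "g t = h t" if tN: "t \<in> {x..y} - N" for t
    proof -
      have "t \<in> space lborel" by simp
      then have "(u has_real_derivative (- \<Lambda>)) (at t) \<longleftrightarrow> t \<in> S" using tN N(1) by blast
      then show ?thesis unfolding g_def h_def by simp
    qed
    show ?thesis by (rule has_integral_spike[OF negN gh hint])
  qed
  have const: "u y - u x = \<kappa> * (y - x)" if xy: "x \<le> y" and gk: "\<forall>t\<in>{x<..<y}. g t = \<kappa>" for x y \<kappa>
  proof -
    have ck: "((\<lambda>t. \<kappa>) has_integral (\<kappa> * (y - x))) {x..y}"
      using has_integral_const_real[of \<kappa> x y] xy by (simp add: mult.commute)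
    have "(g has_integral (\<kappa> * (y - x))) {x..y}"
      using has_integral_spike_finite[of "{x, y}" "{x..y}" g "\<lambda>t. \<kappa>", OF _ _ ck] gk by auto
    then show ?thesis using ftc[OF xy] by (rule has_integral_unique[symmetric])
  qed
  have dec: "\<forall>k s. 0 \<le> s \<longrightarrow> s \<le> \<delta> \<longrightarrow> u (a k + s) = u (a k) - \<Lambda> * s"
  proof (intro allI impI)
    fix k s assume s: "0 \<le> s" "s \<le> \<delta>"
    have "\<forall>t\<in>{a k<..<a k + s}. g t = - \<Lambda>"
    proof
      fix t assume "t \<in> {a k<..<a k + s}"
      then have "t \<in> {a k<..<a k + \<delta>}" using s by auto
      then have "t \<in> I k" using a by blast
      then show "g t = - \<Lambda>" unfolding g_def S_def by auto
    qed
    from const[OF _ this] s show "u (a k + s) = u (a k) - \<Lambda> * s" by simp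
  qed
  have inc: "\<forall>x y. x \<le> y \<longrightarrow> (\<forall>k. a k + \<delta> \<le> x \<or> y \<le> a k) \<longrightarrow> u y = u x + (y - x)"
  proof (intro allI impI)
    fix x y assume xy: "x \<le> y" and disj: "\<forall>k. a k + \<delta> \<le> x \<or> y \<le> a k"
    have "\<forall>t\<in>{x<..<y}. g t = 1"
    proof
      fix t assume t: "t \<in> {x<..<y}"
      have "t \<notin> I k" for k
      proof
        assume "t \<in> I k"
        then have "t \<in> {a k..a k + \<delta>}" using a by blast
        then have "a k \<le> t" "t \<le> a k + \<delta>" by auto
        moreover have "a k + \<delta> \<le> x \<or> y \<le> a k" using disj by blast
        ultimately show False using t by auto
      qed
      then show "g t = 1" unfolding g_def S_def by auto
    qed
    from const[OF xy this] show "u y = u x + (y - x)" by simp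
  qed
  show ?thesis using sep dec inc by blast
qed

theorem theorem1p6:
  fixes \<Lambda> \<delta> T :: real and L :: nat
  assumes "\<Lambda> > 0" and "\<delta> > 0" and "L \<ge> 1"
    and "T = real L * (\<Lambda> + 1) * \<delta>"
  shows "\<forall>u. minimizer T \<Lambda> \<delta> u \<longleftrightarrow>
           (\<exists>x0::real. u = (\<lambda>x. ubar \<Lambda> \<delta> (x - x0) - \<Lambda> * \<delta> / 2))"
proof -
  note L = assms(1) and d = assms(2) and L1 = assms(3) and T = assms(4)
  define m where "m = T * (\<Lambda> * \<delta> / 2)\<^sup>2 / 3"
  have Tpos: "T > 0" unfolding T using L d L1 by (intro mult_pos_pos) auto
  have lb: "integral {0..T} (\<lambda>x. (v x)\<^sup>2) \<ge> m" if vadm: "admissible T \<Lambda> \<delta> v" for v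
  proof -
    obtain a :: "nat \<Rightarrow> real" where a: "\<forall>i j. i \<noteq> j \<longrightarrow> \<delta> \<le> \<bar>a i - a j\<bar>"
      "\<forall>k s. 0 \<le> s \<longrightarrow> s \<le> \<delta> \<longrightarrow> v (a k + s) = v (a k) - \<Lambda> * s"
      "\<forall>x y. x \<le> y \<longrightarrow> (\<forall>k. a k + \<delta> \<le> x \<or> y \<le> a k) \<longrightarrow> v y = v x + (y - x)"
      using adm_props[OF L d vadm] by blast
    have "continuous_on UNIV v" "\<forall>x. v (x + T) = v x" using vadm unfolding admissible_def by blast+
    from core(1)[OF L d L1 T this a] show ?thesis unfolding m_def .
  qed
  have eqc: "\<exists>x0. v = (\<lambda>x. ubar \<Lambda> \<delta> (x - x0) - \<Lambda> * \<delta> / 2)"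
    if vadm: "admissible T \<Lambda> \<delta> v" and veq: "integral {0..T} (\<lambda>x. (v x)\<^sup>2) = m" for v
  proof -
    obtain a :: "nat \<Rightarrow> real" where a: "\<forall>i j. i \<noteq> j \<longrightarrow> \<delta> \<le> \<bar>a i - a j\<bar>"
      "\<forall>k s. 0 \<le> s \<longrightarrow> s \<le> \<delta> \<longrightarrow> v (a k + s) = v (a k) - \<Lambda> * s"
      "\<forall>x y. x \<le> y \<longrightarrow> (\<forall>k. a k + \<delta> \<le> x \<or> y \<le> a k) \<longrightarrow> v y = v x + (y - x)"
      using adm_props[OF L d vadm] by blast
    have "continuous_on UNIV v" "\<forall>x. v (x + T) = v x" using vadm unfolding admissible_def by blast+
    from core(2)[OF L d L1 T this a] veq have "\<forall>t. v t = ubar \<Lambda> \<delta> (t - (a 0 + \<delta>)) - \<Lambda> * \<delta> / 2"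
      unfolding m_def by blast
    then have "v = (\<lambda>x. ubar \<Lambda> \<delta> (x - (a 0 + \<delta>)) - \<Lambda> * \<delta> / 2)" by (simp add: fun_eq_iff)
    then show ?thesis by (rule exI)
  qed
  have Vadm: "admissible T \<Lambda> \<delta> (\<lambda>x. ubar \<Lambda> \<delta> (x - x0) - \<Lambda> * \<delta> / 2)" for x0
    using ubar_adm[OF L d T] .
  have Vint: "integral {0..T} (\<lambda>x. (ubar \<Lambda> \<delta> (x - x0) - \<Lambda> * \<delta> / 2)\<^sup>2) = m" for x0
    using ubar_integral[OF L d T] unfolding m_def .
  have F0mono: "F0 T v \<le> F0 T w \<longleftrightarrow> integral {0..T} (\<lambda>x. (v x)\<^sup>2) \<le> integral {0..T} (\<lambda>x. (w x)\<^sup>2)" for v w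
    unfolding F0_def using Tpos by (simp add: divide_le_cancel)
  show ?thesis
  proof (intro allI iffI)
    fix u assume mu: "minimizer T \<Lambda> \<delta> u"
    then have adm: "admissible T \<Lambda> \<delta> u" unfolding minimizer_def by blast
    have le: "F0 T u \<le> F0 T (\<lambda>x. ubar \<Lambda> \<delta> (x - 0) - \<Lambda> * \<delta> / 2)"
      using mu Vadm[of 0] unfolding minimizer_def by blast
    have "integral {0..T} (\<lambda>x. (u x)\<^sup>2) \<le> m" using le unfolding F0mono Vint .
    then have "integral {0..T} (\<lambda>x. (u x)\<^sup>2) = m" using lb[OF adm] by simp
    then show "\<exists>x0. u = (\<lambda>x. ubar \<Lambda> \<delta> (x - x0) - \<Lambda> * \<delta> / 2)" using eqc[OF adm] by blast
  next
    fix u assume "\<exists>x0. u = (\<lambda>x. ubar \<Lambda> \<delta> (x - x0) - \<Lambda> * \<delta> / 2)"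
    then obtain x0 where u: "u = (\<lambda>x. ubar \<Lambda> \<delta> (x - x0) - \<Lambda> * \<delta> / 2)" by blast
    show "minimizer T \<Lambda> \<delta> u"
      unfolding minimizer_def
    proof (intro conjI allI impI)
      show "admissible T \<Lambda> \<delta> u" unfolding u by (rule Vadm)
      fix v assume va: "admissible T \<Lambda> \<delta> v"
      show "F0 T u \<le> F0 T v" unfolding F0mono u Vint using lb[OF va] .
    qed
  qed
qed

end
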